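(* Let $r\ge2$ and $n\ge 2r$. An $r$-cgh $H\subseteq\binom{\Omega_n}{r}$ is $M_1^{(r)}$-saturated if and only if $H=H_n^{(r)}(C)$ for some $\ell\ge1$ and some $r$-valid tuple $C=(w_1,\dots,w_{2\ell+1})$.
   Context: $\Omega_n=\{v_0,\dots,v_{n-1}\}$ with cyclic order $v_0<\dots<v_{n-1}<v_0$ (indices mod $n$). A cgh is a family of subsets (edges) of $\Omega_n$; an $r$-cgh has all edges of size $r$. $M_1^{(r)}$ is the $r$-cgh with edges $\{v_0,\dots,v_{r-1}\}$ and $\{v_r,\dots,v_{2r-1}\}$ on $\Omega_{2r}$. $H$ contains a copy of $M_1^{(r)}$ iff it has two edges $h_1,h_2$ and vertices $u\neq u'$ with $h_1\subseteq[u,u']$ and $h_2\cap[u,u']=\emptyset$ (two edges separated by a chord). $H$ is $M_1^{(r)}$-saturated if it contains no such pair but adding any $e\in\binom{\Omega_n}{r}\setminus H$ creates one. For distinct vertices $u,w$, $(u,w)$ is the set of vertices strictly between $u$ and $w$ moving clockwise from $u$ to $w$, and $[u,w]=(u,w)\cup\{u,w\}$. A tuple $C=(w_1,\dots,w_{2\ell+1})$ of distinct vertices is semi-valid if $w_1<w_3<\dots<w_{2\ell+1}<w_2<w_4<\dots<w_{2\ell}<w_1$ in clockwise cyclic order, and $r$-valid if moreover $|[w_i,w_{i-1}]|\ge r$ for all $i$ (indices mod $2\ell+1$). $H_n^{(r)}(C)=\{e\in\binom{\Omega_n}{r}: e\cap[w_i,w_{i-1}]\neq\emptyset\ \forall i\in\{1,\dots,2\ell+1\}\}$,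 indices mod $2\ell+1$. *)

theory Defs
  imports Main
begin

text \<open>Vertices of Omega_n are 0..n-1 (v_i is i), clockwise order = increasing index mod n.\<close>

definition verts :: "nat \<Rightarrow> nat set" where
  "verts n = {..<n}"

definition cint :: "nat \<Rightarrow> nat \<Rightarrow> nat \<Rightarrow> nat set" where
  "cint n u w = {(u + k) mod n | k. k \<le> (w + n - u) mod n}"

definition rsets :: "nat \<Rightarrow> nat \<Rightarrow> nat set set" where
  "rsets n r = {e. e \<subseteq> verts n \<and> card e = r}"

text \<open>H contains a copy of M_1^(r): two edges separated by a chord.\<close>
definition contains_M1 :: "nat \<Rightarrow> nat set set \<Rightarrow> bool" where
  "contains_M1 n H \<longleftrightarrow> (\<exists>h1\<in>H. \<exists>h2\<in>H. \<exists>u\<in>verts n. \<exists>u'\<in>verts n.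
      u \<noteq> u' \<and> h1 \<subseteq> cint n u u' \<and> h2 \<inter> cint n u u' = {})"

definition M1_saturated :: "nat \<Rightarrow> nat \<Rightarrow> nat set set \<Rightarrow> bool" where
  "M1_saturated n r H \<longleftrightarrow> H \<subseteq> rsets n r \<and> \<not> contains_M1 n H \<and>
     (\<forall>e \<in> rsets n r - H. contains_M1 n (insert e H))"

definition cyc_ordered :: "nat \<Rightarrow> nat list \<Rightarrow> bool" where
  "cyc_ordered n s \<longleftrightarrow> distinct s \<and> set s \<subseteq> verts n \<and>
     sorted_wrt (<) (map (\<lambda>x. (x + n - hd s) mod n) s)"

text \<open>Tuples C = (w_1,...,w_{2l+1}) are lists, with w_{j+1} = C!j (0-based).
  The index predecessor of position i (mod length) is (i + length C - 1) mod length C.\<close>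
definition semi_valid :: "nat \<Rightarrow> nat list \<Rightarrow> bool" where
  "semi_valid n C \<longleftrightarrow> odd (length C) \<and>
     cyc_ordered n (map (\<lambda>j. C ! (2*j)) [0..<(length C + 1) div 2] @
                    map (\<lambda>j. C ! (2*j+1)) [0..<length C div 2])"

definition r_valid :: "nat \<Rightarrow> nat \<Rightarrow> nat list \<Rightarrow> bool" where
  "r_valid n r C \<longleftrightarrow> semi_valid n C \<and>
     (\<forall>i<length C. card (cint n (C ! i) (C ! ((i + length C - 1) mod length C))) \<ge> r)"

definition Hc :: "nat \<Rightarrow> nat \<Rightarrow> nat list \<Rightarrow> nat set set" where
  "Hc n r C = {e \<in> rsets n r. \<forall>i<length C.
      e \<inter> cint n (C ! i) (C ! ((i + length C - 1) mod length C)) \<noteq> {}}"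

end

theory Submission
  imports Defs
begin


definition dd :: "nat \<Rightarrow> nat \<Rightarrow> nat \<Rightarrow> nat" where
  "dd n u x = (if u \<le> x then x - u else x + n - u)"

lemma dd_mod: "u < n \<Longrightarrow> x < n \<Longrightarrow> (x + n - u) mod n = dd n u x"
proof -
  assume a: "u < n" "x < n"
  show ?thesis
  proof (cases "u \<le> x")
    case True
    then have "x + n - u = (x - u) + n" by simp
    then have "(x + n - u) mod n = (x - u) mod n" by simp
    also have "\<dots> = x - u" using a by simp
    finally show ?thesis using True by (simp add: dd_def)
  next
    case False
    then show ?thesis using a by (simp add: dd_def)
  qed
qed

lemma dd_lt: "u < n \<Longrightarrow> x < n \<Longrightarrow> dd n u x < n"
  unfolding dd_def by auto

lemma dd_self[simp]: "dd n u u = 0" by (simp add: dd_def)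

lemma dd_rot: "b < n \<Longrightarrow> u < n \<Longrightarrow> x < n \<Longrightarrow> dd n u x = dd n (dd n b u) (dd n b x)"
  unfolding dd_def by auto

lemma dd_add_mod: "u < n \<Longrightarrow> k < n \<Longrightarrow> dd n u ((u + k) mod n) = k"
proof -
  assume a: "u < n" "k < n"
  show ?thesis
  proof (cases "u + k < n")
    case True then show ?thesis by (simp add: dd_def)
  next
    case False
    have "u + k - n < n" using a by arith
    then have "(u + k) mod n = u + k - n"
      using False le_mod_geq[of n "u+k"] by simp
    then show ?thesis using False a by (simp add: dd_def)
  qed
qed

lemma add_dd_mod: "u < n \<Longrightarrow> x < n \<Longrightarrow> (u + dd n u x) mod n = x"
  unfolding dd_def by auto

lemma cint_eq: "u < n \<Longrightarrow> w < n \<Longrightarrow> cint n u w = {x. x < n \<and> dd n u x \<le> dd n u w}"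
proof -
  assume a: "u < n" "w < n"
  show ?thesis
  proof (rule set_eqI, rule iffI)
    fix x assume "x \<in> cint n u w"
    then obtain k where k: "x = (u + k) mod n" "k \<le> (w + n - u) mod n" unfolding cint_def by auto
    have "k \<le> dd n u w" using k a dd_mod by simp
    moreover have "k < n" using calculation dd_lt a by (meson le_less_trans)
    ultimately show "x \<in> {x. x < n \<and> dd n u x \<le> dd n u w}"
      using k a dd_add_mod by (simp add: a)
  next
    fix x assume "x \<in> {x. x < n \<and> dd n u x \<le> dd n u w}"
    then have x: "x < n" "dd n u x \<le> dd n u w" by auto
    have "x = (u + dd n u x) mod n" using add_dd_mod a x by simp
    moreover have "dd n u x \<le> (w + n - u) mod n" using x dd_mod a by simp
    ultimately show "x \<in> cint n u w" unfolding cint_def by blast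
  qed
qed

lemma cint_mem: "u < n \<Longrightarrow> w < n \<Longrightarrow> x \<in> cint n u w \<longleftrightarrow> x < n \<and> dd n u x \<le> dd n u w"
  using cint_eq by auto

lemma card_cint: "u < n \<Longrightarrow> w < n \<Longrightarrow> card (cint n u w) = dd n u w + 1"
proof -
  assume a: "u < n" "w < n"
  have "cint n u w = (\<lambda>k. (u + k) mod n) ` {..dd n u w}"
    unfolding cint_def using dd_mod[OF a] by auto
  moreover have "inj_on (\<lambda>k. (u + k) mod n) {..dd n u w}"
  proof (rule inj_onI)
    fix k1 k2 assume "k1 \<in> {..dd n u w}" "k2 \<in> {..dd n u w}" "(u + k1) mod n = (u + k2) mod n"
    moreover have "dd n u w < n" using dd_lt a by simp
    ultimately have "k1 < n" "k2 < n" by auto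
    then show "k1 = k2" using dd_add_mod[OF a(1)] \<open>(u + k1) mod n = (u + k2) mod n\<close>
      by metis
  qed
  ultimately show ?thesis by (simp add: card_image)
qed

lemma cint_sub: "0 < n \<Longrightarrow> cint n u w \<subseteq> verts n"
  unfolding cint_def verts_def by auto



lemma dd_le_iff: "a < n \<Longrightarrow> c < n \<Longrightarrow> t < n \<Longrightarrow>
   dd n a t \<le> dd n a c \<longleftrightarrow> (if a \<le> c then a \<le> t \<and> t \<le> c else a \<le> t \<or> t \<le> c)"
  unfolding dd_def by auto

lemma cint_coord: "b < n \<Longrightarrow> u < n \<Longrightarrow> w < n \<Longrightarrow>
  x \<in> cint n u w \<longleftrightarrow> x < n \<and> dd n (dd n b u) (dd n b x) \<le> dd n (dd n b u) (dd n b w)"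
  using cint_mem dd_rot by (metis)

lemma mod_add_if: "(a::nat) < m \<Longrightarrow> b < m \<Longrightarrow> (a + b) mod m = (if a + b < m then a + b else a + b - m)"
proof (cases "a + b < m")
  case False
  assume "a < m" "b < m"
  then have "a + b - m < m" by linarith
  then show ?thesis using False le_mod_geq[of m "a+b"] by simp
qed simp

lemma dd_cmp_abs:
  assumes "a < n" "b < n" "c < n" "(a \<le> b) = (i \<le> j)" "(a \<le> c) = (i \<le> k)" "(b \<le> c) = (j \<le> k)"
    "i < m" "j < m" "k < m"
  shows "dd n a b \<le> dd n a c \<longleftrightarrow> dd m i j \<le> dd m i k"
proof (cases "i \<le> j")
  case T1: True
  show ?thesis
  proof (cases "i \<le> k")
    case True
    then show ?thesis using T1 assms by (simp add: dd_def) arith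
  next
    case False
    then show ?thesis using T1 assms by (simp add: dd_def) arith
  qed
next
  case T1: False
  show ?thesis
  proof (cases "i \<le> k")
    case True
    then show ?thesis using T1 assms by (simp add: dd_def) arith
  next
    case False
    then show ?thesis using T1 assms by (simp add: dd_def) arith
  qed
qed

definition frame :: "nat \<Rightarrow> nat list \<Rightarrow> bool" where
 "frame n ps \<longleftrightarrow> ps \<noteq> [] \<and> (\<forall>q<length ps. ps!q < n) \<and>
   (\<forall>i j. i < j \<longrightarrow> j < length ps \<longrightarrow> dd n (ps!0) (ps!i) < dd n (ps!0) (ps!j))"

lemma fr_lt: "frame n ps \<Longrightarrow> q < length ps \<Longrightarrow> ps!q < n"
  unfolding frame_def by auto

lemma fr_n: "frame n ps \<Longrightarrow> 0 < n"
  unfolding frame_def by (metis gr_zeroI length_greater_0_conv not_less0)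

lemma fr_mono: "frame n ps \<Longrightarrow> i < length ps \<Longrightarrow> j < length ps \<Longrightarrow>
  dd n (ps!0) (ps!i) < dd n (ps!0) (ps!j) \<longleftrightarrow> i < j"
  unfolding frame_def by (metis less_asym nat_neq_iff)

lemma fr_mono_le: "frame n ps \<Longrightarrow> i < length ps \<Longrightarrow> j < length ps \<Longrightarrow>
  dd n (ps!0) (ps!i) \<le> dd n (ps!0) (ps!j) \<longleftrightarrow> i \<le> j"
  using fr_mono by (metis not_less)

lemma fr_Dlt: "frame n ps \<Longrightarrow> i < length ps \<Longrightarrow> dd n (ps!0) (ps!i) < n"
  using fr_lt dd_lt by (metis length_greater_0_conv frame_def)

lemma fr_dd: "frame n ps \<Longrightarrow> i < length ps \<Longrightarrow> j < length ps \<Longrightarrow>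
  dd n (ps!i) (ps!j) = dd n (dd n (ps!0) (ps!i)) (dd n (ps!0) (ps!j))"
  using fr_lt dd_rot by (metis length_greater_0_conv frame_def)

lemma fr_cmp:
  assumes f: "frame n ps" and i: "i < length ps" and j: "j < length ps" and k: "k < length ps"
  shows "dd n (ps!i) (ps!j) \<le> dd n (ps!i) (ps!k) \<longleftrightarrow> dd (length ps) i j \<le> dd (length ps) i k"
proof -
  define D where "D q = dd n (ps!0) (ps!q)" for q
  have m: "\<And>a b. a < length ps \<Longrightarrow> b < length ps \<Longrightarrow> D a \<le> D b \<longleftrightarrow> a \<le> b"
    using fr_mono_le[OF f] D_def by simp
  have ms: "\<And>a b. a < length ps \<Longrightarrow> b < length ps \<Longrightarrow> D a < D b \<longleftrightarrow> a < b"
    using fr_mono[OF f] D_def by simp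
  have lt: "D i < n" "D j < n" "D k < n" using fr_Dlt[OF f] i j k D_def by auto
  have "dd n (ps!i) (ps!j) \<le> dd n (ps!i) (ps!k) \<longleftrightarrow> dd n (D i) (D j) \<le> dd n (D i) (D k)"
    using fr_dd[OF f] i j k D_def by simp
  also have "\<dots> \<longleftrightarrow> dd (length ps) i j \<le> dd (length ps) i k"
    using dd_cmp_abs[OF lt _ _ _ i j k] m[OF i j] m[OF i k] m[OF j k] by blast
  finally show ?thesis .
qed

lemma fr_cmp_less:
  assumes f: "frame n ps" and i: "i < length ps" and j: "j < length ps" and k: "k < length ps"
  shows "dd n (ps!i) (ps!j) < dd n (ps!i) (ps!k) \<longleftrightarrow> dd (length ps) i j < dd (length ps) i k"
  using fr_cmp[OF f i k j] by (meson not_less)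

lemma fr_mem:
  assumes f: "frame n ps" and i: "i < length ps" and j: "j < length ps" and k: "k < length ps"
  shows "ps!j \<in> cint n (ps!i) (ps!k) \<longleftrightarrow> dd (length ps) i j \<le> dd (length ps) i k"
  using fr_cmp[OF assms] cint_mem fr_lt[OF f] i j k by metis

lemma fr_inj: "frame n ps \<Longrightarrow> i < length ps \<Longrightarrow> j < length ps \<Longrightarrow> ps!i = ps!j \<Longrightarrow> i = j"
  using fr_mono by (metis less_irrefl nat_neq_iff)

lemma dd_idx: "j < m \<Longrightarrow> q < m \<Longrightarrow> dd m j ((q + j) mod m) = q"
  using dd_add_mod by (metis add.commute)

lemma fr_rotate:
  assumes f: "frame n ps" and j: "j < length ps"
  shows "frame n (rotate j ps)" "\<And>q. q < length ps \<Longrightarrow> rotate j ps ! q = ps ! ((q + j) mod length ps)"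
proof -
  show nr: "\<And>q. q < length ps \<Longrightarrow> rotate j ps ! q = ps ! ((q + j) mod length ps)"
    by (simp add: nth_rotate add.commute)
  have r0: "rotate j ps ! 0 = ps ! j" using nr[of 0] j by (cases ps) auto
  have lp: "0 < length ps" using j by linarith
  show "frame n (rotate j ps)"
    unfolding frame_def
  proof (intro conjI allI impI)
    show "rotate j ps \<noteq> []" using f frame_def by auto
    fix q assume "q < length (rotate j ps)"
    then have "(q + j) mod length ps < length ps" "q < length ps" using lp by auto
    then show "rotate j ps ! q < n" using nr fr_lt[OF f] by metis
  next
    fix a b assume ab: "a < b" "b < length (rotate j ps)"
    then have ab': "a < length ps" "b < length ps" by auto
    have "dd (length ps) j ((a + j) mod length ps) < dd (length ps) j ((b + j) mod length ps)"
      using dd_idx j ab ab' by simp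
    then have "dd n (ps!j) (ps!((a + j) mod length ps)) < dd n (ps!j) (ps!((b + j) mod length ps))"
      using fr_cmp_less[OF f j] lp by simp
    then show "dd n (rotate j ps ! 0) (rotate j ps ! a) < dd n (rotate j ps ! 0) (rotate j ps ! b)"
      using nr ab' r0 by simp
  qed
qed



lemma cint_lin: "b < n \<Longrightarrow> v < n \<Longrightarrow> v' < n \<Longrightarrow> x \<in> cint n v v' \<longleftrightarrow> x < n \<and>
  (if dd n b v \<le> dd n b v' then dd n b v \<le> dd n b x \<and> dd n b x \<le> dd n b v'
   else dd n b v \<le> dd n b x \<or> dd n b x \<le> dd n b v')"
proof -
  assume a: "b < n" "v < n" "v' < n"
  show ?thesis
  proof (cases "x < n")
    case True
    then show ?thesis using cint_coord[OF a] dd_le_iff dd_lt a by (metis (full_types))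
  next
    case False
    then show ?thesis using cint_mem a by auto
  qed
qed

lemma thresh:
  fixes m :: nat
  assumes "\<And>i j. i \<le> j \<Longrightarrow> j < m \<Longrightarrow> P j \<Longrightarrow> P i"
  shows "\<exists>k\<le>m. \<forall>q<m. P q \<longleftrightarrow> q < k"
proof (cases "\<forall>q<m. P q")
  case True
  then show ?thesis by (intro exI[of _ m]) auto
next
  case False
  define k where "k = (LEAST q. q < m \<and> \<not> P q)"
  have k1: "k < m \<and> \<not> P k" using False LeastI_ex[of "\<lambda>q. q < m \<and> \<not> P q"] k_def by auto
  have k2: "\<And>q. q < k \<Longrightarrow> P q" using k1 not_less_Least k_def
    by (metis order.strict_trans)
  have "\<forall>q<m. P q \<longleftrightarrow> q < k"
  proof (intro allI impI)
    fix q assume "q < m"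
    show "P q \<longleftrightarrow> q < k"
    proof
      assume "P q" then show "q < k" using assms[of k q] k1 \<open>q < m\<close> by (meson not_less)
    qed (rule k2)
  qed
  then show ?thesis using k1 by (intro exI[of _ k]) auto
qed

lemma thresh_set:
  fixes m :: nat
  assumes "\<forall>q<m. P q \<longleftrightarrow> q < k" "k \<le> m"
  shows "{q. q < m \<and> P q} = {..<k}"
proof (rule set_eqI)
  fix x
  show "x \<in> {q. q < m \<and> P q} \<longleftrightarrow> x \<in> {..<k}"
  proof
    assume "x \<in> {..<k}"
    then have "x < m" using assms(2) by simp
    then show "x \<in> {q. q < m \<and> P q}" using assms(1) \<open>x \<in> {..<k}\<close> by simp
  qed (use assms in auto)
qed

definition Bq :: "nat \<Rightarrow> nat list \<Rightarrow> nat \<Rightarrow> nat \<Rightarrow> nat set" where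
 "Bq n ps l q = cint n (ps!q) (ps!((q + l) mod length ps))"

definition Gf :: "nat \<Rightarrow> nat \<Rightarrow> nat list \<Rightarrow> nat \<Rightarrow> nat set set" where
 "Gf n r ps l = {e \<in> rsets n r. \<forall>q<length ps. e \<inter> Bq n ps l q \<noteq> {}}"

lemma two_point:
  assumes f: "frame n ps" and m: "length ps = 2*l+1" and j: "j < length ps" and q: "q < length ps"
  shows "ps!j \<in> Bq n ps l q \<or> ps!((j+l) mod length ps) \<in> Bq n ps l q"
proof -
  let ?m = "length ps"
  have lm: "l < ?m" using m by simp
  have jl: "(j + l) mod ?m < ?m" using m by simp
  have ql: "(q + l) mod ?m < ?m" using m by simp
  have e1: "dd ?m q ((q+l) mod ?m) = l" using dd_add_mod q lm by simp
  have "dd ?m q j \<le> l \<or> dd ?m q ((j+l) mod ?m) \<le> l"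
  proof (cases "dd ?m q j \<le> l")
    case False
    have "dd ?m q ((j+l) mod ?m) \<le> l"
    proof (cases "j + l < ?m")
      case True
      then have "(j+l) mod ?m = j + l" by simp
      then show ?thesis using False m True by (simp add: dd_def split: if_splits; arith)
    next
      case F2: False
      then have "(j+l) mod ?m = j + l - ?m" using mod_add_if[OF j lm] by simp
      then show ?thesis using False m F2 j q by (simp add: dd_def split: if_splits; arith)
    qed
    then show ?thesis by simp
  qed simp
  then show ?thesis unfolding Bq_def using fr_mem[OF f q _ ql] j jl e1 by simp
qed

lemma exists_sub:
  assumes "u < n" "w < n" "u \<noteq> w" "2 \<le> r" "r \<le> card (cint n u w)"
  shows "\<exists>E. E \<subseteq> cint n u w \<and> card E = r \<and> u \<in> E \<and> w \<in> E"
proof -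
  have uw: "u \<in> cint n u w" "w \<in> cint n u w" using cint_mem assms by auto
  have fin: "finite (cint n u w)" using card_cint assms
    by (metis add_is_0 card.infinite one_neq_zero)
  have "card (cint n u w - {u,w}) = card (cint n u w) - 2"
    using uw fin assms(3) by (simp add: card_Diff_subset)
  then have "r - 2 \<le> card (cint n u w - {u,w})" using assms by simp
  then obtain F where F: "F \<subseteq> cint n u w - {u,w}" "card F = r - 2" "finite F"
    by (rule obtain_subset_with_card_n)
  define E where "E = F \<union> {u,w}"
  have "card E = r - 2 + 2" unfolding E_def using F assms(3)
    by (subst card_Un_disjoint) auto
  then have "card E = r" using assms by simp
  moreover have "E \<subseteq> cint n u w" using F uw E_def by auto
  moreover have "u \<in> E" "w \<in> E" using E_def by auto
  ultimately show ?thesis by blast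
qed

lemma run_lemma:
  assumes f: "frame n ps" and m: "length ps = 2*l+1" and v: "v < n" "v' < n"
    and c: "card {q. q < length ps \<and> ps!q \<in> cint n v v'} \<le> l"
  shows "\<exists>q<length ps. Bq n ps l q \<inter> cint n v v' = {}"
proof -
  let ?m = "length ps"
  define b where "b = ps!0"
  have b: "b < n" using fr_lt f b_def m by simp
  define D where "D q = dd n b (ps!q)" for q
  have Dm: "\<And>i j. i<?m \<Longrightarrow> j<?m \<Longrightarrow> D i < D j \<longleftrightarrow> i < j"
    using fr_mono[OF f] D_def b_def by simp
  have Dml: "\<And>i j. i<?m \<Longrightarrow> j<?m \<Longrightarrow> D i \<le> D j \<longleftrightarrow> i \<le> j"
    using fr_mono_le[OF f] D_def b_def by simp
  have D0: "D 0 = 0" using D_def b_def by simp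
  define tv where "tv = dd n b v"
  define tv' where "tv' = dd n b v'"
  have memK: "\<And>x. x \<in> cint n v v' \<longleftrightarrow> x < n \<and> (if tv \<le> tv' then tv \<le> dd n b x \<and> dd n b x \<le> tv'
      else tv \<le> dd n b x \<or> dd n b x \<le> tv')"
    using cint_lin[OF b v] tv_def tv'_def by simp
  have memB: "\<And>q x. q < ?m \<Longrightarrow> x \<in> Bq n ps l q \<longleftrightarrow> x < n \<and>
      (if D q \<le> D ((q+l) mod ?m) then D q \<le> dd n b x \<and> dd n b x \<le> D ((q+l) mod ?m)
       else D q \<le> dd n b x \<or> dd n b x \<le> D ((q+l) mod ?m))"
  proof -
    fix q x assume q: "q < ?m"
    have "(q+l) mod ?m < ?m" using m by simp
    then show "?thesis q x" unfolding Bq_def D_def using cint_lin[OF b] fr_lt[OF f] q by simp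
  qed
  have psK: "\<And>q. q<?m \<Longrightarrow> ps!q \<in> cint n v v' \<longleftrightarrow>
      (if tv \<le> tv' then tv \<le> D q \<and> D q \<le> tv' else tv \<le> D q \<or> D q \<le> tv')"
    using memK fr_lt[OF f] D_def by simp
  have dcl1: "\<And>z i j. i \<le> j \<Longrightarrow> j < ?m \<Longrightarrow> D j < z \<Longrightarrow> D i < z"
    using Dml by (meson le_less_trans order.strict_trans1)
  have dcl2: "\<And>z i j. i \<le> j \<Longrightarrow> j < ?m \<Longrightarrow> D j \<le> z \<Longrightarrow> D i \<le> z"
    using Dml by (meson le_less_trans order.trans)
  show ?thesis
  proof (cases "tv \<le> tv'")
    case True
    obtain s where s: "s \<le> ?m" "\<forall>q<?m. D q < tv \<longleftrightarrow> q < s"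
      using thresh[of ?m "\<lambda>q. D q < tv"] dcl1 by blast
    obtain s' where s': "s' \<le> ?m" "\<forall>q<?m. D q \<le> tv' \<longleftrightarrow> q < s'"
      using thresh[of ?m "\<lambda>q. D q \<le> tv'"] dcl2 by blast
    have ss: "s \<le> s'"
    proof (rule ccontr)
      assume "\<not> s \<le> s'"
      then have a: "s' < ?m" "s' < s" using s by auto
      then have "D s' < tv" using s by auto
      then have "D s' \<le> tv'" using True by simp
      then show False using s' a by auto
    qed
    have "{q. q < ?m \<and> ps!q \<in> cint n v v'} = {s..<s'}"
    proof (rule set_eqI)
      fix q
      show "q \<in> {q. q < ?m \<and> ps!q \<in> cint n v v'} \<longleftrightarrow> q \<in> {s..<s'}"
      proof (cases "q < ?m")
        case True
        then show ?thesis using psK[OF True] \<open>tv \<le> tv'\<close> s s' by auto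
      next
        case False
        then show ?thesis using s' by auto
      qed
    qed
    then have cnt: "s' - s \<le> l" using c by simp
    show ?thesis
    proof (cases "s' < ?m")
      case sm: True
      have nD: "\<not> D s' \<le> tv'" using s' sm by auto
      have "Bq n ps l s' \<inter> cint n v v' = {}"
      proof (rule ccontr)
        assume "Bq n ps l s' \<inter> cint n v v' \<noteq> {}"
        then obtain x where x: "x \<in> Bq n ps l s'" "x \<in> cint n v v'" by auto
        define t where "t = dd n b x"
        have xK: "tv \<le> t" "t \<le> tv'" using memK[of x] x True t_def by auto
        show False
        proof (cases "s' + l < ?m")
          case True
          then have md: "(s' + l) mod ?m = s' + l" by simp
          have "D s' \<le> D (s' + l)" using Dml sm True by simp
          then have "D s' \<le> t" using memB[OF sm, of x] x md t_def by simp
          then show False using xK nD by simp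
        next
          case False
          have lm: "l < ?m" using m by simp
          have md: "(s' + l) mod ?m = s' + l - ?m" using mod_add_if[OF sm lm] False by simp
          have q2: "s' + l - ?m < s" using cnt m False ss by linarith
          have q2m: "s' + l - ?m < ?m" using q2 s by linarith
          have "D (s' + l - ?m) < tv" using s q2 q2m by auto
          moreover have "D (s' + l - ?m) < D s'" using Dm q2m sm q2 ss by simp
          ultimately show False using memB[OF sm, of x] x md t_def xK nD by auto
        qed
      qed
      then show ?thesis using sm by blast
    next
      case False
      then have sm: "s' = ?m" using s' by simp
      have ls: "l < s" using cnt sm m by linarith
      have lm: "l < ?m" using m by simp
      have Dl: "D l < tv" using s ls lm by auto
      have "Bq n ps l 0 \<inter> cint n v v' = {}"
      proof (rule ccontr)
        assume "Bq n ps l 0 \<inter> cint n v v' \<noteq> {}"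
        then obtain x where x: "x \<in> Bq n ps l 0" "x \<in> cint n v v'" by auto
        define t where "t = dd n b x"
        have xK: "tv \<le> t" using memK[of x] x True t_def by auto
        have md: "(0 + l) mod ?m = l" using lm by simp
        have "D 0 \<le> D l" using D0 by simp
        then have "t \<le> D l" using memB[of 0 x] x md t_def m by simp
        then show False using xK Dl by simp
      qed
      then show ?thesis using m by (intro exI[of _ 0]) auto
    qed
  next
    case False
    obtain s1 where s1: "s1 \<le> ?m" "\<forall>q<?m. D q \<le> tv' \<longleftrightarrow> q < s1"
      using thresh[of ?m "\<lambda>q. D q \<le> tv'"] dcl2 by blast
    obtain s2 where s2: "s2 \<le> ?m" "\<forall>q<?m. D q < tv \<longleftrightarrow> q < s2"
      using thresh[of ?m "\<lambda>q. D q < tv"] dcl1 by blast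
    have ss: "s1 \<le> s2"
    proof (rule ccontr)
      assume "\<not> s1 \<le> s2"
      then have a: "s2 < ?m" "s2 < s1" using s1 by auto
      then have "D s2 \<le> tv'" using s1 by auto
      then have "D s2 < tv" using False by simp
      then show False using s2 a by auto
    qed
    have "{q. q < ?m \<and> ps!q \<in> cint n v v'} = {..<s1} \<union> {s2..<?m}"
    proof (rule set_eqI)
      fix q
      show "q \<in> {q. q < ?m \<and> ps!q \<in> cint n v v'} \<longleftrightarrow> q \<in> {..<s1} \<union> {s2..<?m}"
      proof (cases "q < ?m")
        case True
        then show ?thesis using psK[OF True] False s1 s2 by auto
      next
        case False
        then show ?thesis using s1 by auto
      qed
    qed
    moreover have "card ({..<s1} \<union> {s2..<?m}) = s1 + (?m - s2)"
      using ss by (subst card_Un_disjoint) auto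
    ultimately have cnt: "s1 + (?m - s2) \<le> l" using c by simp
    have s1l: "s1 + l < s2" using cnt m s2 by linarith
    have s1m: "s1 < ?m" "s1 + l < ?m" using s1l s2 by auto
    have md: "(s1 + l) mod ?m = s1 + l" using s1m by simp
    have nD: "\<not> D s1 \<le> tv'" using s1 s1m by auto
    have D2: "D (s1 + l) < tv" using s2 s1l s1m by auto
    have "D s1 \<le> D (s1 + l)" using Dml s1m by simp
    have "Bq n ps l s1 \<inter> cint n v v' = {}"
    proof (rule ccontr)
      assume "Bq n ps l s1 \<inter> cint n v v' \<noteq> {}"
      then obtain x where x: "x \<in> Bq n ps l s1" "x \<in> cint n v v'" by auto
      define t where "t = dd n b x"
      have xK: "tv \<le> t \<or> t \<le> tv'" using memK[of x] x False t_def by auto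
      have "D s1 \<le> t \<and> t \<le> D (s1 + l)" using memB[OF s1m(1), of x] x md t_def
        \<open>D s1 \<le> D (s1 + l)\<close> by simp
      then show False using xK nD D2 by auto
    qed
    then show ?thesis using s1m by blast
  qed
qed

lemma compl_arc:
  assumes u: "u < n" and w: "w < n" and a: "dd n u w + 1 < n"
  shows "{x. x < n \<and> x \<notin> cint n u w} = cint n ((w+1) mod n) ((u+n-1) mod n)"
proof -
  have n0: "0 < n" using u by simp
  have "(w+1) mod n = (u + (dd n u w + 1)) mod n"
    using add_dd_mod[OF u w] mod_Suc_eq[of "u + dd n u w" n] by simp
  then have w1: "dd n u ((w+1) mod n) = dd n u w + 1" using dd_add_mod[OF u a] by simp
  have "(u+n-1) mod n = (u + (n-1)) mod n" using n0 by simp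
  then have u2: "dd n u ((u+n-1) mod n) = n - 1" using dd_add_mod[OF u, of "n-1"] n0 by simp
  have w1n: "(w+1) mod n < n" "(u+n-1) mod n < n" using n0 by auto
  show ?thesis
  proof (rule set_eqI)
    fix x
    show "x \<in> {x. x < n \<and> x \<notin> cint n u w} \<longleftrightarrow> x \<in> cint n ((w+1) mod n) ((u+n-1) mod n)"
    proof (cases "x < n")
      case True
      have "dd n u x < n" using dd_lt u True by simp
      then show ?thesis using cint_lin[OF u w1n, of x] w1 u2 cint_mem[OF u w, of x] True a by auto
    next
      case False
      then show ?thesis using cint_mem w1n by auto
    qed
  qed
qed

lemma Gf_free:
  assumes f: "frame n ps" and m: "length ps = 2*l+1" and r: "2 \<le> r"
  shows "\<not> contains_M1 n (Gf n r ps l)"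
proof
  let ?m = "length ps"
  assume "contains_M1 n (Gf n r ps l)"
  then obtain h1 h2 u u' where h: "h1 \<in> Gf n r ps l" "h2 \<in> Gf n r ps l" "u \<in> verts n" "u' \<in> verts n"
     "u \<noteq> u'" "h1 \<subseteq> cint n u u'" "h2 \<inter> cint n u u' = {}"
    unfolding contains_M1_def by blast
  have uu: "u < n" "u' < n" using h verts_def by auto
  have hit: "\<And>h q. h \<in> Gf n r ps l \<Longrightarrow> q < ?m \<Longrightarrow> h \<inter> Bq n ps l q \<noteq> {}"
    unfolding Gf_def by auto
  have cardbig: "\<And>h v v'. h \<in> Gf n r ps l \<Longrightarrow> v < n \<Longrightarrow> v' < n \<Longrightarrow> h \<subseteq> cint n v v' \<Longrightarrow>
     l < card {q. q < ?m \<and> ps!q \<in> cint n v v'}"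
  proof (rule ccontr)
    fix h v v' assume a: "h \<in> Gf n r ps l" "v < n" "v' < n" "h \<subseteq> cint n v v'"
      "\<not> l < card {q. q < ?m \<and> ps!q \<in> cint n v v'}"
    then obtain q where "q < ?m" "Bq n ps l q \<inter> cint n v v' = {}"
      using run_lemma[OF f m a(2) a(3)] by auto
    then show False using hit[OF a(1)] a(4) by blast
  qed
  have c1: "l < card {q. q < ?m \<and> ps!q \<in> cint n u u'}" using cardbig[OF h(1) uu h(6)] .
  have h2r: "h2 \<in> rsets n r" using h(2) Gf_def by auto
  then have "card h2 = r" "h2 \<subseteq> verts n" using rsets_def by auto
  then have "h2 \<noteq> {}" using r by auto
  then obtain x where x: "x \<in> h2" by auto
  then have xn: "x < n" "x \<notin> cint n u u'" using h(7) \<open>h2 \<subseteq> verts n\<close> verts_def by auto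
  have a: "dd n u u' + 1 < n"
  proof (rule ccontr)
    assume "\<not> dd n u u' + 1 < n"
    moreover have "dd n u x < n" using dd_lt uu xn by simp
    ultimately have "dd n u x \<le> dd n u u'" by simp
    then show False using xn cint_mem uu by auto
  qed
  define J where "J = cint n ((u'+1) mod n) ((u+n-1) mod n)"
  have Jeq: "{x. x < n \<and> x \<notin> cint n u u'} = J" using compl_arc[OF uu a] J_def by simp
  have h2J: "h2 \<subseteq> J" using Jeq h(7) \<open>h2 \<subseteq> verts n\<close> verts_def by auto
  have n0: "0 < n" using uu by simp
  have c2: "l < card {q. q < ?m \<and> ps!q \<in> J}" using cardbig[OF h(2) _ _ h2J[unfolded J_def]] n0
    J_def by simp
  have disj: "{q. q < ?m \<and> ps!q \<in> cint n u u'} \<inter> {q. q < ?m \<and> ps!q \<in> J} = {}"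
    using Jeq by auto
  have "card ({q. q < ?m \<and> ps!q \<in> cint n u u'} \<union> {q. q < ?m \<and> ps!q \<in> J}) \<le> card {..<?m}"
    by (rule card_mono) auto
  moreover have "card ({q. q < ?m \<and> ps!q \<in> cint n u u'} \<union> {q. q < ?m \<and> ps!q \<in> J}) =
     card {q. q < ?m \<and> ps!q \<in> cint n u u'} + card {q. q < ?m \<and> ps!q \<in> J}"
    using disj by (intro card_Un_disjoint) auto
  ultimately show False using c1 c2 m by simp
qed

lemma Gf_sat:
  assumes f: "frame n ps" and m: "length ps = 2*l+1" and l: "1 \<le> l" and r: "2 \<le> r"
    and big: "\<forall>q<length ps. r \<le> card (Bq n ps l q)"
  shows "M1_saturated n r (Gf n r ps l)"
  unfolding M1_saturated_def
proof (intro conjI ballI)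
  let ?m = "length ps"
  show "Gf n r ps l \<subseteq> rsets n r" unfolding Gf_def by auto
  show "\<not> contains_M1 n (Gf n r ps l)" using Gf_free[OF f m r] .
  fix e assume e: "e \<in> rsets n r - Gf n r ps l"
  then obtain q where q: "q < ?m" "e \<inter> Bq n ps l q = {}" unfolding Gf_def by auto
  define q2 where "q2 = (q + l) mod ?m"
  have q2m: "q2 < ?m" using q2_def m by simp
  have "q2 \<noteq> q"
  proof
    assume "q2 = q"
    then have "dd ?m q q2 = 0" by simp
    moreover have "dd ?m q q2 = l" using q2_def dd_add_mod q m by simp
    ultimately show False using l by simp
  qed
  then have neq: "ps!q \<noteq> ps!q2" using fr_inj[OF f q(1) q2m] by auto
  have lt: "ps!q < n" "ps!q2 < n" using fr_lt[OF f] q q2m by auto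
  obtain E where E: "E \<subseteq> Bq n ps l q" "card E = r" "ps!q \<in> E" "ps!q2 \<in> E"
    using exists_sub[OF lt neq r] big q unfolding Bq_def q2_def by auto
  have n0: "0 < n" using lt by simp
  have Ev: "E \<subseteq> verts n" using E(1) cint_sub[OF n0] unfolding Bq_def by blast
  have EG: "E \<in> Gf n r ps l"
    unfolding Gf_def rsets_def
  proof (intro CollectI conjI allI impI Ev E(2))
    fix q' assume q': "q' < ?m"
    show "E \<inter> Bq n ps l q' \<noteq> {}"
      using two_point[OF f m q(1) q'] E q2_def by auto
  qed
  show "contains_M1 n (insert e (Gf n r ps l))"
    unfolding contains_M1_def
    using EG E(1) q(2) lt neq verts_def unfolding Bq_def q2_def
    by (intro bexI[of _ E] bexI[of _ e] bexI[of _ "ps!q"] bexI[of _ "ps!((q + l) mod ?m)"]) auto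
qed



definition ilv :: "nat list \<Rightarrow> nat list" where
  "ilv C = map (\<lambda>j. C ! (2*j)) [0..<(length C + 1) div 2] @ map (\<lambda>j. C ! (2*j+1)) [0..<length C div 2]"

definition pos :: "nat \<Rightarrow> nat \<Rightarrow> nat" where
  "pos l k = (if even k then k div 2 else l + (k+1) div 2)"

lemma ilv_len: "length C = 2*l+1 \<Longrightarrow> length (ilv C) = 2*l+1"
  unfolding ilv_def by simp

lemma ilv_pos: assumes "length C = 2*l+1" "k < 2*l+1" shows "ilv C ! (pos l k) = C ! k"
proof (cases "even k")
  case True
  then obtain j where j: "k = 2*j" by auto
  then have "j < l + 1" using assms by simp
  then consider "j < l" | "j = l" by linarith
  then show ?thesis using j assms unfolding ilv_def pos_def by cases (auto simp add: nth_append)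
next
  case False
  then obtain j where j: "k = 2*j+1" by (metis oddE)
  then have "j < l" using assms by simp
  moreover have "(2*j+1+1) div 2 = j + 1" by simp
  ultimately show ?thesis using j assms unfolding ilv_def pos_def by (simp add: nth_append)
qed

lemma pos_lt: "k < 2*l+1 \<Longrightarrow> pos l k < 2*l+1"
  unfolding pos_def by (auto elim!: oddE)

lemma pos_surj: "q < 2*l+1 \<Longrightarrow> \<exists>k<2*l+1. pos l k = q"
proof (cases "q \<le> l")
  case True
  assume "q < 2*l+1"
  then show ?thesis using True unfolding pos_def by (intro exI[of _ "2*q"]) auto
next
  case False
  assume "q < 2*l+1"
  then have "pos l (2*(q-l-1)+1) = q" using False unfolding pos_def by simp
  then show ?thesis using False \<open>q < 2*l+1\<close> by (intro exI[of _ "2*(q-l-1)+1"]) auto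
qed

lemma pos_pred: "i < 2*l+1 \<Longrightarrow> pos l ((i + (2*l+1) - 1) mod (2*l+1)) = (pos l i + l) mod (2*l+1)"
proof (cases "i = 0")
  case True
  then show ?thesis unfolding pos_def by simp
next
  case False
  assume i: "i < 2*l+1"
  then have md: "(i + (2*l+1) - 1) mod (2*l+1) = i - 1" using False
    by (metis Nat.add_diff_assoc2 add.commute add_diff_cancel_left' less_imp_diff_less mod_add_self2
        mod_less not_gr_zero less_one linorder_not_le)
  show ?thesis
  proof (cases "even i")
    case True
    then obtain j where j: "i = 2*j" by auto
    then have "j \<ge> 1" "j \<le> l" using False i by auto
    moreover have "odd (2*j - 1)" using \<open>j \<ge> 1\<close> by simp
    moreover have "(2*j - 1 + 1) div 2 = j" using \<open>j \<ge> 1\<close> by simp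
    ultimately show ?thesis using md j unfolding pos_def by simp
  next
    case F2: False
    then obtain j where j: "i = 2*j+1" by (metis oddE)
    then have "j < l" using i by simp
    have "(l + (2*j+1+1) div 2 + l) mod (2*l+1) = j"
    proof -
      have e: "l + (2*j+1+1) div 2 + l = j + (2*l+1)" by simp
      have "(l + (2*j+1+1) div 2 + l) mod (2*l+1) = (j + (2*l+1)) mod (2*l+1)" by (simp only: e)
      also have "\<dots> = j mod (2*l+1)" by (rule mod_add_self2)
      also have "\<dots> = j" using \<open>j < l\<close> by simp
      finally show ?thesis .
    qed
    then show ?thesis using md j unfolding pos_def by simp
  qed
qed

lemma cyc_frame: "cyc_ordered n L \<Longrightarrow> L \<noteq> [] \<Longrightarrow> frame n L"
proof -
  assume c: "cyc_ordered n L" and ne: "L \<noteq> []"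
  have lt: "\<And>q. q < length L \<Longrightarrow> L!q < n" using c unfolding cyc_ordered_def verts_def
    by (meson lessThan_iff nth_mem subset_iff)
  have h: "hd L = L!0" using ne by (simp add: hd_conv_nth)
  have "\<And>i j. i < j \<Longrightarrow> j < length L \<Longrightarrow> dd n (L!0) (L!i) < dd n (L!0) (L!j)"
  proof -
    fix i j assume ij: "i < j" "j < length L"
    have "(L!i + n - hd L) mod n < (L!j + n - hd L) mod n"
      using c ij unfolding cyc_ordered_def sorted_wrt_iff_nth_less by auto
    then show "dd n (L!0) (L!i) < dd n (L!0) (L!j)" using dd_mod lt ij h ne
      by (metis length_greater_0_conv order.strict_trans)
  qed
  then show ?thesis unfolding frame_def using ne lt by auto
qed

lemma frame_cyc: "frame n L \<Longrightarrow> cyc_ordered n L"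
proof -
  assume f: "frame n L"
  have ne: "L \<noteq> []" using f frame_def by auto
  have lt: "\<And>q. q < length L \<Longrightarrow> L!q < n" using fr_lt[OF f] .
  have h: "hd L = L!0" using ne by (simp add: hd_conv_nth)
  have "distinct L" unfolding distinct_conv_nth using fr_inj[OF f] by blast
  moreover have "set L \<subseteq> verts n" using lt unfolding verts_def by (auto simp: in_set_conv_nth)
  moreover have "sorted_wrt (<) (map (\<lambda>x. (x + n - hd L) mod n) L)"
    unfolding sorted_wrt_iff_nth_less
  proof (intro allI impI)
    fix i j assume ij: "i < j" "j < length (map (\<lambda>x. (x + n - hd L) mod n) L)"
    then have ij': "i < length L" "j < length L" by auto
    have "dd n (L!0) (L!i) < dd n (L!0) (L!j)" using f ij ij' unfolding frame_def by auto
    then show "map (\<lambda>x. (x + n - hd L) mod n) L ! i < map (\<lambda>x. (x + n - hd L) mod n) L ! j"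
      using dd_mod lt ij' h ne by simp
  qed
  ultimately show ?thesis unfolding cyc_ordered_def by simp
qed

lemma arc_Bq: assumes "length C = 2*l+1" "i < 2*l+1"
  shows "cint n (C ! i) (C ! ((i + length C - 1) mod length C)) = Bq n (ilv C) l (pos l i)"
proof -
  have p: "(i + (2*l+1) - 1) mod (2*l+1) < 2*l+1" by simp
  show ?thesis unfolding Bq_def using ilv_pos[OF assms(1) assms(2)] ilv_pos[OF assms(1) p]
    pos_pred[OF assms(2)] ilv_len[OF assms(1)] assms(1) by simp
qed

lemma Hc_Gf: assumes "length C = 2*l+1" shows "Hc n r C = Gf n r (ilv C) l"
proof -
  have "\<And>e. (\<forall>i<length C. e \<inter> cint n (C ! i) (C ! ((i + length C - 1) mod length C)) \<noteq> {}) \<longleftrightarrow>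
     (\<forall>q<length (ilv C). e \<inter> Bq n (ilv C) l q \<noteq> {})"
  proof
    fix e assume a: "\<forall>i<length C. e \<inter> cint n (C ! i) (C ! ((i + length C - 1) mod length C)) \<noteq> {}"
    show "\<forall>q<length (ilv C). e \<inter> Bq n (ilv C) l q \<noteq> {}"
    proof (intro allI impI)
      fix q assume "q < length (ilv C)"
      then obtain k where k: "k < 2*l+1" "pos l k = q" using pos_surj ilv_len[OF assms] by auto
      then show "e \<inter> Bq n (ilv C) l q \<noteq> {}" using a arc_Bq[OF assms k(1)] assms by auto
    qed
  next
    fix e assume a: "\<forall>q<length (ilv C). e \<inter> Bq n (ilv C) l q \<noteq> {}"
    show "\<forall>i<length C. e \<inter> cint n (C ! i) (C ! ((i + length C - 1) mod length C)) \<noteq> {}"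
      using a arc_Bq[OF assms] pos_lt ilv_len[OF assms] assms by auto
  qed
  then show ?thesis unfolding Hc_def Gf_def by simp
qed

lemma semi_valid_ilv: "semi_valid n C \<longleftrightarrow> odd (length C) \<and> cyc_ordered n (ilv C)"
  unfolding semi_valid_def ilv_def by simp

lemma r_valid_iff: assumes "length C = 2*l+1"
  shows "r_valid n r C \<longleftrightarrow> semi_valid n C \<and> (\<forall>q<2*l+1. r \<le> card (Bq n (ilv C) l q))"
proof -
  have "(\<forall>i<length C. r \<le> card (cint n (C ! i) (C ! ((i + length C - 1) mod length C)))) \<longleftrightarrow>
        (\<forall>q<2*l+1. r \<le> card (Bq n (ilv C) l q))"
  proof
    assume a: "\<forall>i<length C. r \<le> card (cint n (C ! i) (C ! ((i + length C - 1) mod length C)))"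
    show "\<forall>q<2*l+1. r \<le> card (Bq n (ilv C) l q)"
    proof (intro allI impI)
      fix q assume "q < 2*l+1"
      then obtain k where k: "k < 2*l+1" "pos l k = q" using pos_surj by auto
      then show "r \<le> card (Bq n (ilv C) l q)" using a arc_Bq[OF assms k(1)] assms by auto
    qed
  next
    assume a: "\<forall>q<2*l+1. r \<le> card (Bq n (ilv C) l q)"
    show "\<forall>i<length C. r \<le> card (cint n (C ! i) (C ! ((i + length C - 1) mod length C)))"
      using a arc_Bq[OF assms] pos_lt assms by auto
  qed
  then show ?thesis unfolding r_valid_def by simp
qed

theorem easy_dir:
  assumes r: "2 \<le> r" and C: "length C = 2*l+1" and l: "1 \<le> l" and v: "r_valid n r C"
  shows "M1_saturated n r (Hc n r C)"
proof -
  have sv: "semi_valid n C" and big: "\<forall>q<2*l+1. r \<le> card (Bq n (ilv C) l q)"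
    using r_valid_iff[OF C] v by auto
  have "ilv C \<noteq> []" using ilv_len[OF C] by auto
  then have f: "frame n (ilv C)" using cyc_frame sv semi_valid_ilv by blast
  show ?thesis using Gf_sat[OF f ilv_len[OF C] l r] big ilv_len[OF C] Hc_Gf[OF C] by simp
qed

lemma construct_C:
  assumes f: "frame n ps" and m: "length ps = 2*l+1"
  shows "\<exists>C. length C = 2*l+1 \<and> semi_valid n C \<and> ilv C = ps"
proof -
  define C where "C = map (\<lambda>k. ps ! (pos l k)) [0..<2*l+1]"
  have lC: "length C = 2*l+1" using C_def by simp
  have "ilv C = ps"
  proof (rule nth_equalityI)
    show "length (ilv C) = length ps" using ilv_len[OF lC] m by simp
    fix q assume "q < length (ilv C)"
    then obtain k where k: "k < 2*l+1" "pos l k = q" using pos_surj ilv_len[OF lC] by auto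
    have Ck: "C ! k = ps ! (pos l k)" unfolding C_def using k(1) by (simp del: upt_Suc)
    then show "ilv C ! q = ps ! q" using ilv_pos[OF lC k(1)] k(2) by simp
  qed
  moreover have "semi_valid n C" using semi_valid_ilv frame_cyc[OF f] calculation lC by simp
  ultimately show ?thesis using lC by blast
qed

lemma contains_mono: "contains_M1 n H \<Longrightarrow> H \<subseteq> H' \<Longrightarrow> contains_M1 n H'"
  unfolding contains_M1_def by blast



lemma dd_inj: "y < n \<Longrightarrow> a < n \<Longrightarrow> b < n \<Longrightarrow> dd n y a = dd n y b \<Longrightarrow> a = b"
  using add_dd_mod by metis

lemma sorted_frame:
  assumes P: "finite P" "P \<subseteq> {..<n}" "y \<in> P"
  shows "\<exists>ps. frame n ps \<and> set ps = P \<and> length ps = card P \<and> ps!0 = y"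
proof -
  have y: "y < n" using P by auto
  obtain ts where ts: "sorted_wrt (<) ts" "set ts = dd n y ` P"
    using ex1_sorted_list_for_set_if_finite[of "dd n y ` P"] P(1) by auto
  have dts: "distinct ts" using ts strict_sorted_iff by auto
  have inj: "inj_on (dd n y) P"
    using dd_inj y P(2) unfolding inj_on_def by blast
  have lts: "length ts = card P"
    using distinct_card[OF dts] ts(2) card_image[OF inj] by simp
  have tsn: "\<And>q. q < length ts \<Longrightarrow> ts!q < n"
  proof -
    fix q assume "q < length ts"
    then have "ts!q \<in> dd n y ` P" using ts(2) nth_mem by metis
    then show "ts!q < n" using dd_lt y P(2) by auto
  qed
  have mono: "\<And>i j. i < j \<Longrightarrow> j < length ts \<Longrightarrow> ts!i < ts!j"
    using ts(1) sorted_wrt_iff_nth_less by blast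
  have ne: "ts \<noteq> []" using ts(2) P(3) by auto
  have t0: "ts!0 = 0"
  proof (rule ccontr)
    assume a: "ts!0 \<noteq> 0"
    have "0 \<in> set ts" using ts(2) P(3) by force
    then obtain j where j: "j < length ts" "ts!j = 0" by (metis in_set_conv_nth)
    then have "j \<noteq> 0" using a by metis
    then show False using mono[of 0 j] j by simp
  qed
  define ps where "ps = map (\<lambda>t. (y + t) mod n) ts"
  have lps: "length ps = length ts" using ps_def by simp
  have psq: "\<And>q. q < length ts \<Longrightarrow> dd n y (ps!q) = ts!q"
    using ps_def dd_add_mod y tsn by simp
  have p0: "ps!0 = y" using ps_def t0 ne y by simp
  have psn: "\<And>q. q < length ts \<Longrightarrow> ps!q < n" using ps_def y by simp
  have "frame n ps" unfolding frame_def
    using ne lps psn p0 psq mono by auto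
  moreover have "set ps = P"
  proof -
    have "set ps = (\<lambda>t. (y + t) mod n) ` (dd n y ` P)" using ps_def ts(2) by simp
    also have "\<dots> = (\<lambda>p. (y + dd n y p) mod n) ` P" by (simp add: image_image)
    also have "\<dots> = P"
    proof -
      have "\<And>p. p \<in> P \<Longrightarrow> (y + dd n y p) mod n = p" using add_dd_mod y P(2) by auto
      then show ?thesis by simp
    qed
    finally show ?thesis .
  qed
  ultimately show ?thesis using lps lts p0 by auto
qed

locale satH =
  fixes n r :: nat and H :: "nat set set"
  assumes r2: "2 \<le> r" and nr: "2*r \<le> n" and Hs: "M1_saturated n r H" and Hne: "H \<noteq> {}"
begin

lemma n0: "0 < n" using r2 nr by simp

lemma Hr: "H \<subseteq> rsets n r" using Hs M1_saturated_def by auto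
lemma Hfree: "\<not> contains_M1 n H" using Hs M1_saturated_def by auto

lemma edge_card: "h \<in> H \<Longrightarrow> card h = r \<and> h \<subseteq> verts n" using Hr rsets_def by auto

definition elen :: "nat \<Rightarrow> nat" where
  "elen x = (LEAST k. \<exists>h\<in>H. h \<subseteq> cint n x ((x + k) mod n))"

definition ef :: "nat \<Rightarrow> nat" where
  "ef x = (x + elen x) mod n"

lemma ex_full: assumes x: "x < n" shows "\<exists>h\<in>H. h \<subseteq> cint n x ((x + (n-1)) mod n)"
proof -
  obtain h where h: "h \<in> H" using Hne by auto
  have d: "dd n x ((x + (n-1)) mod n) = n - 1" by (rule dd_add_mod[OF x]) (use n0 in simp)
  have "verts n \<subseteq> cint n x ((x + (n-1)) mod n)"
  proof
    fix y assume "y \<in> verts n"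
    then have y: "y < n" by (simp add: verts_def)
    have "dd n x y \<le> n - 1" using dd_lt[OF x y] by simp
    then show "y \<in> cint n x ((x + (n-1)) mod n)" using cint_mem x y d n0 by simp
  qed
  moreover have "h \<subseteq> verts n" using edge_card h by simp
  ultimately show ?thesis using h by blast
qed

lemma elen_ok: "x < n \<Longrightarrow> \<exists>h\<in>H. h \<subseteq> cint n x (ef x)"
  unfolding ef_def elen_def
  by (rule LeastI[of "\<lambda>k. \<exists>h\<in>H. h \<subseteq> cint n x ((x+k) mod n)" "n-1"], rule ex_full)

lemma elen_le: "x < n \<Longrightarrow> elen x \<le> n - 1"
  unfolding elen_def
  by (rule Least_le[of "\<lambda>k. \<exists>h\<in>H. h \<subseteq> cint n x ((x+k) mod n)" "n-1"], rule ex_full)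

lemma elen_min: "k < elen x \<Longrightarrow> \<not> (\<exists>h\<in>H. h \<subseteq> cint n x ((x + k) mod n))"
  unfolding elen_def using not_less_Least by blast

lemma ef_lt: "ef x < n" unfolding ef_def using n0 by simp

lemma dd_ef: "x < n \<Longrightarrow> dd n x (ef x) = elen x"
  unfolding ef_def using dd_add_mod elen_le n0
  by (metis diff_less less_numeral_extra(1) order_le_less_trans)

lemma arc_card: assumes "v < n" "w < n" "h \<in> H" "h \<subseteq> cint n v w" shows "r \<le> dd n v w + 1"
proof -
  have "card h \<le> card (cint n v w)" using assms card_cint
    by (metis add_is_0 card.infinite card_mono one_neq_zero)
  then show ?thesis using card_cint assms edge_card by simp
qed

lemma elen_pos: "x < n \<Longrightarrow> 1 \<le> elen x"
proof (rule ccontr)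
  assume x: "x < n" and "\<not> 1 \<le> elen x"
  then have "dd n x (ef x) = 0" using dd_ef by simp
  moreover obtain h where "h \<in> H" "h \<subseteq> cint n x (ef x)" using elen_ok x by blast
  ultimately show False using arc_card[OF x ef_lt] r2 by fastforce
qed

lemma ef_neq: "x < n \<Longrightarrow> ef x \<noteq> x"
  using dd_ef elen_pos by fastforce

lemma elen_arc: assumes v: "v < n" and w: "w < n" and h: "h \<in> H" "h \<subseteq> cint n v w"
  shows "elen v \<le> dd n v w"
proof (rule ccontr)
  assume "\<not> elen v \<le> dd n v w"
  then have "\<not> (\<exists>h\<in>H. h \<subseteq> cint n v ((v + dd n v w) mod n))" using elen_min by simp
  then show False using h add_dd_mod[OF v w] by simp
qed

lemma ef_sub: assumes v: "v < n" and w: "w < n" and h: "h \<in> H" "h \<subseteq> cint n v w"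
  shows "cint n v (ef v) \<subseteq> cint n v w"
proof
  fix y assume "y \<in> cint n v (ef v)"
  then have "y < n" "dd n v y \<le> dd n v (ef v)" using cint_mem[OF v ef_lt] by auto
  then show "y \<in> cint n v w" using elen_arc[OF assms] dd_ef[OF v] cint_mem[OF v w] by simp
qed

lemma C4: assumes p: "p < n" and x: "x \<in> cint n p (ef p)"
  shows "dd n x (ef p) \<le> dd n x (ef x)"
proof (rule ccontr)
  assume neg: "\<not> dd n x (ef p) \<le> dd n x (ef x)"
  have xn: "x < n" using x cint_mem p ef_lt by auto
  define a where "a = dd n p x"
  define E where "E = dd n p (ef p)"
  define c where "c = dd n p (ef x)"
  have aE: "a \<le> E" using x cint_mem p ef_lt a_def E_def by auto
  have En: "E < n" "c < n" "a < n" using dd_lt p ef_lt xn E_def c_def a_def by auto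
  have r1: "dd n x (ef p) = dd n a E" using dd_rot[OF p xn ef_lt[of p]] a_def E_def by simp
  have r2': "dd n x (ef x) = dd n a c" using dd_rot[OF p xn ef_lt[of x]] a_def c_def by simp
  have "dd n a c < dd n a E" using neg r1 r2' by simp
  then have ac: "a \<le> c" "c < E" using aE En unfolding dd_def by (auto split: if_splits)
  have sub: "cint n x (ef x) \<subseteq> cint n p (ef x)"
  proof
    fix y assume y: "y \<in> cint n x (ef x)"
    then have yn: "y < n" using cint_mem xn ef_lt by auto
    have "a \<le> dd n p y \<and> dd n p y \<le> c" using y cint_lin[OF p xn ef_lt, of y] ac a_def c_def by simp
    then show "y \<in> cint n p (ef x)" using cint_lin[OF p p ef_lt, of y] yn c_def by simp
  qed
  obtain h where h: "h \<in> H" "h \<subseteq> cint n x (ef x)" using elen_ok xn by blast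
  have "elen p \<le> c" using elen_arc[OF p ef_lt h(1)] h(2) sub c_def by blast
  then show False using ac dd_ef[OF p] E_def by simp
qed

lemma outside_small: assumes "u < n" "u' < n" "x < n" "x \<notin> cint n u u'"
  shows "dd n u u' + 1 < n"
proof (rule ccontr)
  assume "\<not> dd n u u' + 1 < n"
  moreover have "dd n u x < n" using dd_lt assms by simp
  ultimately have "dd n u x \<le> dd n u u'" by simp
  then show False using assms cint_mem by auto
qed

lemma disj_arcs:
  assumes h: "h1 \<in> H" "h2 \<in> H" and uv: "u < n" "u' < n" "v < n" "v' < n" "u \<noteq> u'"
    and s: "h1 \<subseteq> cint n u u'" "h2 \<subseteq> cint n v v'" and d: "cint n u u' \<inter> cint n v v' = {}"
  shows False
proof -
  have "h2 \<inter> cint n u u' = {}" using s d by blast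
  moreover have "u \<in> verts n" "u' \<in> verts n" using uv verts_def by auto
  ultimately have "contains_M1 n H" unfolding contains_M1_def using h uv(5) s(1) by blast
  then show False using Hfree by simp
qed

lemma sat_use:
  assumes E: "E \<in> rsets n r" and hit: "\<forall>x<n. E \<inter> cint n x (ef x) \<noteq> {}"
  shows "E \<in> H"
proof (rule ccontr)
  assume nE: "E \<notin> H"
  then have "contains_M1 n (insert E H)" using Hs E unfolding M1_saturated_def by blast
  then obtain h1 h2 u u' where h: "h1 \<in> insert E H" "h2 \<in> insert E H" "u \<in> verts n" "u' \<in> verts n"
     "u \<noteq> u'" "h1 \<subseteq> cint n u u'" "h2 \<inter> cint n u u' = {}"
    unfolding contains_M1_def by blast
  have uu: "u < n" "u' < n" using h verts_def by auto
  have Ec: "card E = r" "E \<subseteq> verts n" using E rsets_def by auto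
  then have Ene: "E \<noteq> {}" using r2 by auto
  show False
  proof (cases "h1 = E")
    case h1E: True
    show False
    proof (cases "h2 = E")
      case True
      then show False using h1E h Ene by blast
    next
      case False
      then have h2H: "h2 \<in> H" using h by auto
      have "h2 \<noteq> {}" "h2 \<subseteq> verts n" using edge_card[OF h2H] r2 by auto
      then obtain x where x: "x \<in> h2" "x < n" using verts_def by auto
      then have xo: "x \<notin> cint n u u'" using h(7) by auto
      have a: "dd n u u' + 1 < n" using outside_small[OF uu x(2) xo] .
      define w1 where "w1 = (u'+1) mod n"
      define w2 where "w2 = (u+n-1) mod n"
      have w: "w1 < n" "w2 < n" using w1_def w2_def n0 by auto
      have J: "{x. x < n \<and> x \<notin> cint n u u'} = cint n w1 w2" using compl_arc[OF uu a] w1_def w2_def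
        by simp
      have h2J: "h2 \<subseteq> cint n w1 w2" using J h(7) \<open>h2 \<subseteq> verts n\<close> verts_def by auto
      have "cint n w1 (ef w1) \<subseteq> cint n w1 w2" using ef_sub[OF w h2H h2J] .
      then have "E \<inter> cint n w1 (ef w1) = {}" using J h(6) h1E by auto
      then show False using hit w by auto
    qed
  next
    case False
    then have h1H: "h1 \<in> H" using h by auto
    show False
    proof (cases "h2 = E")
      case True
      have "cint n u (ef u) \<subseteq> cint n u u'" using ef_sub[OF uu h1H h(6)] .
      then have "E \<inter> cint n u (ef u) = {}" using h(7) True by auto
      then show False using hit uu by auto
    next
      case F2: False
      then have "h2 \<in> H" using h by auto
      then have "contains_M1 n H" unfolding contains_M1_def using h1H h by blast
      then show False using Hfree by simp
    qed
  qed
qed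

lemma funpow_lt: "x < n \<Longrightarrow> (ef ^^ t) x < n"
  by (induction t) (auto simp: ef_lt)

lemma cycle_ex: "\<exists>y<n. \<exists>k>0. (ef ^^ k) y = y"
proof -
  define g where "g t = (ef ^^ t) 0" for t
  have "g ` {..n} \<subseteq> {..<n}" using funpow_lt n0 g_def by auto
  then have "card (g ` {..n}) \<le> n" by (metis card_lessThan card_mono finite_lessThan)
  then have "card (g ` {..n}) < card {..n}" by simp
  then have "\<not> inj_on g {..n}" by (rule pigeonhole)
  then obtain a b where ab: "a \<le> n" "b \<le> n" "a \<noteq> b" "g a = g b"
    unfolding inj_on_def by auto
  obtain a' b' where ab': "a' < b'" "g a' = g b'" using ab by (metis nat_neq_iff)
  define y where "y = g a'"
  have "(ef ^^ (b' - a')) y = (ef ^^ (b' - a' + a')) 0" using y_def g_def funpow_add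
    by (metis comp_apply)
  also have "\<dots> = y" using ab' y_def g_def by simp
  finally show ?thesis using ab' y_def g_def funpow_lt n0 by (intro exI[of _ y] conjI exI[of _ "b' - a'"]) auto
qed

lemma orbit: "\<exists>P. finite P \<and> P \<subseteq> {..<n} \<and> P \<noteq> {} \<and> ef ` P = P"
proof -
  obtain y k where yk: "y < n" "0 < k" "(ef ^^ k) y = y" using cycle_ex by blast
  define P where "P = (\<lambda>t. (ef ^^ t) y) ` {..<k}"
  have Pmem: "\<And>t. t < k \<Longrightarrow> (ef ^^ t) y \<in> P" unfolding P_def by (rule image_eqI[OF refl]) simp
  have "ef ` P \<subseteq> P"
  proof
    fix z assume "z \<in> ef ` P"
    then obtain t where t: "t < k" "z = ef ((ef ^^ t) y)" using P_def by auto
    then have z: "z = (ef ^^ Suc t) y" by simp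
    show "z \<in> P"
    proof (cases "Suc t < k")
      case True
      have "z = (\<lambda>t. (ef ^^ t) y) (Suc t)" using z by simp
      moreover have "Suc t \<in> {..<k}" using True by simp
      ultimately show ?thesis unfolding P_def by (rule image_eqI)
    next
      case False
      then have "Suc t = k" using t by simp
      then have "z = (ef ^^ 0) y" using z yk by simp
      then show ?thesis using Pmem[of 0] yk by simp
    qed
  qed
  moreover have "P \<subseteq> ef ` P"
  proof
    fix z assume "z \<in> P"
    then obtain t where t: "t < k" "z = (ef ^^ t) y" using P_def by auto
    show "z \<in> ef ` P"
    proof (cases t)
      case 0
      have "z = (ef ^^ Suc (k - 1)) y" using t 0 yk by simp
      then have "z = ef ((ef ^^ (k-1)) y)" by simp
      moreover have "(ef ^^ (k-1)) y \<in> P" using Pmem yk by simp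
      ultimately show ?thesis by blast
    next
      case (Suc t')
      then have "z = ef ((ef ^^ t') y)" using t by simp
      moreover have "(ef ^^ t') y \<in> P" using Pmem t Suc by simp
      ultimately show ?thesis by blast
    qed
  qed
  moreover have "finite P" "P \<subseteq> {..<n}" using P_def funpow_lt yk by auto
  moreover have "P \<noteq> {}" using Pmem yk by blast
  ultimately show ?thesis by blast
qed

end


lemma dd_succ: assumes "i < m" "s < m" "s \<noteq> i"
  shows "dd m ((i+1) mod m) s = dd m i s - 1"
proof (cases "i + 1 < m")
  case True
  then show ?thesis using assms by (simp add: dd_def)
next
  case False
  then have "i + 1 = m" using assms by simp
  then show ?thesis using assms by (simp add: dd_def)
qed

lemma dd_inj2: "a < m \<Longrightarrow> b < m \<Longrightarrow> b' < m \<Longrightarrow> dd m a b = dd m a b' \<Longrightarrow> b = b'"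
  using add_dd_mod by metis

context satH
begin

lemma frame_jump: "\<exists>ps c. frame n ps \<and> 2 \<le> length ps \<and> 1 \<le> c \<and> c < length ps \<and>
   (\<forall>i<length ps. ef (ps!i) = ps!((i + c) mod length ps))"
proof -
  obtain P where P: "finite P" "P \<subseteq> {..<n}" "P \<noteq> {}" "ef ` P = P" using orbit by blast
  obtain y where y: "y \<in> P" using P by auto
  obtain ps where ps: "frame n ps" "set ps = P" "length ps = card P" "ps!0 = y"
    using sorted_frame[OF P(1) P(2) y] by blast
  define m where "m = length ps"
  have f: "frame n ps" using ps by simp
  have yn: "y < n" using y P by auto
  have "ef y \<in> P" using y P(4) by blast
  moreover have "ef y \<noteq> y" using ef_neq yn by simp
  ultimately have "{y, ef y} \<subseteq> P" "card {y, ef y} = 2" using y by auto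
  then have m2: "2 \<le> m" using m_def ps(3) P(1) by (metis card_mono)
  have injP: "inj_on ef P" using eq_card_imp_inj_on[OF P(1), of ef] P(4) by simp
  have "\<forall>i. \<exists>j. i < m \<longrightarrow> j < m \<and> ps!j = ef (ps!i)"
  proof (intro allI)
    fix i
    show "\<exists>j. i < m \<longrightarrow> j < m \<and> ps!j = ef (ps!i)"
    proof (cases "i < m")
      case True
      then have "ps!i \<in> P" using ps(2) m_def by auto
      then have "ef (ps!i) \<in> set ps" using P(4) ps(2) by blast
      then show ?thesis using m_def by (metis in_set_conv_nth)
    qed simp
  qed
  then obtain \<sigma> where sg: "\<And>i. i < m \<Longrightarrow> \<sigma> i < m \<and> ps!(\<sigma> i) = ef (ps!i)" by metis
  have psn: "\<And>i. i < m \<Longrightarrow> ps!i < n" using fr_lt[OF f] m_def by simp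
  have sneq: "\<And>i. i < m \<Longrightarrow> \<sigma> i \<noteq> i" using sg ef_neq psn by metis
  have sinj: "\<And>i j. i < m \<Longrightarrow> j < m \<Longrightarrow> \<sigma> i = \<sigma> j \<Longrightarrow> i = j"
  proof -
    fix i j assume a: "i < m" "j < m" "\<sigma> i = \<sigma> j"
    then have "ef (ps!i) = ef (ps!j)" using sg by metis
    moreover have "ps!i \<in> P" "ps!j \<in> P" using a ps(2) m_def by auto
    ultimately have "ps!i = ps!j" using injP inj_on_def by metis
    then show "i = j" using fr_inj[OF f] a m_def by simp
  qed
  define c where "c i = dd m i (\<sigma> i)" for i
  have c1: "\<And>i. i < m \<Longrightarrow> 1 \<le> c i"
  proof (rule ccontr)
    fix i assume i: "i < m" "\<not> 1 \<le> c i"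
    then have "dd m i (\<sigma> i) = 0" using c_def by simp
    then have "\<sigma> i = i" using add_dd_mod[OF i(1), of "\<sigma> i"] sg i by simp
    then show False using sneq i by simp
  qed
  have step: "\<And>i. i < m \<Longrightarrow> c i \<le> c ((i+1) mod m)"
  proof -
    fix i assume i: "i < m"
    define i' where "i' = (i+1) mod m"
    have i'm: "i' < m" using i'_def m2 by simp
    have d1: "dd m i i' = 1" using dd_add_mod[OF i, of 1] m2 i'_def by simp
    have sm: "\<sigma> i < m" using sg i by simp
    have "dd m i i' \<le> dd m i (\<sigma> i)" using d1 c1[OF i] c_def by simp
    then have "ps!i' \<in> cint n (ps!i) (ps!(\<sigma> i))"
      using fr_mem[OF f, of i i' "\<sigma> i"] i i'm sm m_def by simp
    then have "ps!i' \<in> cint n (ps!i) (ef (ps!i))" using sg i by simp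
    then have "dd n (ps!i') (ef (ps!i)) \<le> dd n (ps!i') (ef (ps!i'))" using C4 psn i by blast
    then have A: "dd n (ps!i') (ps!(\<sigma> i)) \<le> dd n (ps!i') (ps!(\<sigma> i'))" using sg i i'm by simp
    have si'm: "\<sigma> i' < m" using sg i'm by simp
    have le: "dd m i' (\<sigma> i) \<le> dd m i' (\<sigma> i')" using fr_cmp[OF f, of i' "\<sigma> i" "\<sigma> i'"] i'm sm si'm
      m_def A by simp
    have e: "dd m i' (\<sigma> i) = c i - 1" using dd_succ[OF i] sg[OF i] sneq[OF i] i'_def c_def by simp
    have "i' \<noteq> i" using i'_def d1 by auto
    then have "\<sigma> i' \<noteq> \<sigma> i" using sinj i i'm by metis
    then have "dd m i' (\<sigma> i') \<noteq> dd m i' (\<sigma> i)" using dd_inj2 i'm sg i by metis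
    then show "c i \<le> c ((i+1) mod m)" using le e c_def i'_def c1[OF i] by simp
  qed
  have chain: "\<And>d k. k + d < m \<Longrightarrow> c k \<le> c (k + d)"
  proof -
    fix d k
    show "k + d < m \<Longrightarrow> c k \<le> c (k + d)"
    proof (induction d)
      case (Suc d)
      then have "c k \<le> c (k + d)" by simp
      also have "\<dots> \<le> c ((k + d + 1) mod m)" using step[of "k+d"] Suc by simp
      also have "(k + d + 1) mod m = k + Suc d" using Suc by simp
      finally show ?case .
    qed simp
  qed
  have const: "\<And>k. k < m \<Longrightarrow> c k = c 0"
  proof -
    fix k assume k: "k < m"
    have "c 0 \<le> c k" using chain[of 0 k] k by simp
    moreover have "c k \<le> c (m - 1)" using chain[of k "m - 1 - k"] k by simp
    moreover have "c (m-1) \<le> c 0" using step[of "m-1"] m2 by simp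
    ultimately show "c k = c 0" by simp
  qed
  have jump: "\<And>i. i < m \<Longrightarrow> ef (ps!i) = ps!((i + c 0) mod m)"
  proof -
    fix i assume i: "i < m"
    have "\<sigma> i = (i + c i) mod m" using add_dd_mod[OF i] sg[OF i] c_def by simp
    then show "ef (ps!i) = ps!((i + c 0) mod m)" using sg[OF i] const[OF i] by simp
  qed
  have "c 0 < m" using c_def dd_lt m2 sg by simp
  then show ?thesis using f m2 c1[of 0] jump m_def by blast
qed

end


context satH
begin

lemma case_small:
  assumes f: "frame n ps" and m2: "2 \<le> length ps" and c: "1 \<le> c" "c < length ps"
    and jump: "\<forall>i<length ps. ef (ps!i) = ps!((i + c) mod length ps)"
    and sm: "2*c + 2 \<le> length ps"
  shows False
proof -
  let ?m = "length ps"
  define p0 where "p0 = ps!0"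
  have m0: "0 < ?m" using m2 by linarith
  have p0n: "p0 < n" using fr_lt[OF f m0] p0_def by simp
  define D where "D q = dd n p0 (ps!q)" for q
  have Dm: "\<And>i j. i<?m \<Longrightarrow> j<?m \<Longrightarrow> D i < D j \<longleftrightarrow> i < j"
    using fr_mono[OF f] D_def p0_def by simp
  have Dml: "\<And>i j. i<?m \<Longrightarrow> j<?m \<Longrightarrow> D i \<le> D j \<longleftrightarrow> i \<le> j"
    using fr_mono_le[OF f] D_def p0_def by simp
  have idx: "c < ?m" "c + 1 < ?m" "2*c+1 < ?m" using sm by auto
  have j0: "ef (ps!0) = ps!c" using jump[rule_format, OF m0] c by simp
  have "(c + 1 + c) mod ?m = 2*c+1" using idx by simp
  then have j1: "ef (ps!(c+1)) = ps!(2*c+1)" using jump[rule_format, OF idx(2)] by simp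
  have lt: "ps!0 < n" "ps!c < n" "ps!(c+1) < n" "ps!(2*c+1) < n" using fr_lt[OF f] idx m0 by auto
  obtain h1 where h1: "h1 \<in> H" "h1 \<subseteq> cint n (ps!0) (ps!c)" using elen_ok[OF lt(1)] j0 by auto
  obtain h2 where h2: "h2 \<in> H" "h2 \<subseteq> cint n (ps!(c+1)) (ps!(2*c+1))" using elen_ok[OF lt(3)] j1 by auto
  have neq: "ps!0 \<noteq> ps!c"
  proof
    assume "ps!0 = ps!c"
    then have "0 = c" using fr_inj[OF f m0 idx(1)] by simp
    then show False using c by simp
  qed
  have "cint n (ps!0) (ps!c) \<inter> cint n (ps!(c+1)) (ps!(2*c+1)) = {}"
  proof (rule ccontr)
    assume "cint n (ps!0) (ps!c) \<inter> cint n (ps!(c+1)) (ps!(2*c+1)) \<noteq> {}"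
    then obtain y where y: "y \<in> cint n (ps!0) (ps!c)" "y \<in> cint n (ps!(c+1)) (ps!(2*c+1))" by auto
    have D0: "D 0 = 0" using D_def p0_def by simp
    have a1: "D 0 \<le> D c" "D (c+1) \<le> D (2*c+1)" "D c < D (c+1)"
      using Dml[OF m0 idx(1)] Dml[OF idx(2) idx(3)] Dm[OF idx(1) idx(2)] by auto
    have "dd n p0 y \<le> D c" using cint_lin[OF p0n lt(1) lt(2), of y] y(1) a1 D_def p0_def by simp
    moreover have "D (c+1) \<le> dd n p0 y" using cint_lin[OF p0n lt(3) lt(4), of y] y(2) a1 D_def by simp
    ultimately show False using a1 by simp
  qed
  then show False using disj_arcs[OF h1(1) h2(1) lt(1) lt(2) lt(3) lt(4) neq h1(2) h2(2)] by simp
qed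

lemma case_big:
  assumes f: "frame n ps" and m2: "2 \<le> length ps" and c: "1 \<le> c" "c < length ps"
    and jump: "\<forall>i<length ps. ef (ps!i) = ps!((i + c) mod length ps)"
    and bg: "length ps \<le> 2*c" and rD: "r \<le> dd n (ps!0) (ps!c)"
  shows False
proof -
  let ?m = "length ps"
  have m0: "0 < ?m" using m2 by linarith
  define p0 where "p0 = ps!0"
  have p0n: "p0 < n" using fr_lt[OF f m0] p0_def by simp
  define D where "D q = dd n p0 (ps!q)" for q
  have Dm: "\<And>i j. i<?m \<Longrightarrow> j<?m \<Longrightarrow> D i < D j \<longleftrightarrow> i < j"
    using fr_mono[OF f] D_def p0_def by simp
  have Dml: "\<And>i j. i<?m \<Longrightarrow> j<?m \<Longrightarrow> D i \<le> D j \<longleftrightarrow> i \<le> j"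
    using fr_mono_le[OF f] D_def p0_def by simp
  have D0: "D 0 = 0" using D_def p0_def by simp
  have psn: "\<And>q. q < ?m \<Longrightarrow> ps!q < n" using fr_lt[OF f] by simp
  have Dn: "D c < n" using D_def dd_lt p0n psn c by simp
  have Dc: "r \<le> D c" using rD D_def p0_def by simp
  define z where "z = (p0 + (D c - 1)) mod n"
  have zn: "z < n" using z_def n0 by simp
  have dz: "dd n p0 z = D c - 1" using dd_add_mod[OF p0n, of "D c - 1"] Dn z_def by simp
  have neq: "p0 \<noteq> z" using dz Dc r2 by auto
  have cK: "r \<le> card (cint n p0 z)" using card_cint[OF p0n zn] dz Dc by simp
  obtain E where E: "E \<subseteq> cint n p0 z" "card E = r" "p0 \<in> E" "z \<in> E"
    using exists_sub[OF p0n zn neq r2 cK] by blast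
  have Erset: "E \<in> rsets n r" using E cint_sub[OF n0] unfolding rsets_def by blast
  have jp: "\<And>i. i < ?m \<Longrightarrow> ef (ps!i) = ps!((i + c) mod ?m)" using jump by simp
  have cov: "\<And>x. x < n \<Longrightarrow> p0 \<in> cint n x (ef x) \<or> z \<in> cint n x (ef x)"
  proof -
    fix x assume xn: "x < n"
    define t where "t = dd n p0 x"
    show "p0 \<in> cint n x (ef x) \<or> z \<in> cint n x (ef x)"
    proof (cases "x \<in> set ps")
      case True
      then obtain i where i: "i < ?m" "x = ps!i" by (metis in_set_conv_nth)
      define j where "j = (i + c) mod ?m"
      have jm: "j < ?m" using j_def m0 by simp
      have ex: "ef x = ps!j" using jp i j_def by simp
      have djc: "dd ?m i j = c" using dd_add_mod[OF i(1) c(2)] j_def by simp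
      show ?thesis
      proof (cases "i = 0 \<or> ?m - i \<le> c")
        case True
        have "dd ?m i 0 \<le> dd ?m i j" using True djc i unfolding dd_def by auto
        then have "ps!0 \<in> cint n (ps!i) (ps!j)" using fr_mem[OF f i(1) m0 jm] by simp
        then show ?thesis using ex i p0_def by simp
      next
        case False
        then have ic: "1 \<le> i" "i + c < ?m" "i < c" using bg by auto
        then have jj: "j = i + c" using j_def by simp
        have a: "D i \<le> D (i+c)" "D i < D c" "D c \<le> D (i+c)"
          using Dml[OF i(1) ic(2)] Dm[OF i(1) c(2)] Dml[OF c(2) ic(2)] ic by auto
        have "z \<in> cint n (ps!i) (ps!j)"
          using cint_lin[OF p0n psn[OF i(1)] psn[OF jm], of z] zn dz a jj D_def by (simp; linarith)
        then show ?thesis using ex i by simp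
      qed
    next
      case False
      have dcl: "\<And>i j. i \<le> j \<Longrightarrow> j < ?m \<Longrightarrow> D j \<le> t \<Longrightarrow> D i \<le> t"
        using Dml by (meson le_less_trans order.trans)
      obtain k where k: "k \<le> ?m" "\<forall>q<?m. D q \<le> t \<longleftrightarrow> q < k"
        using thresh[of ?m "\<lambda>q. D q \<le> t"] dcl by blast
      have "0 < k" using k D0 m0 by auto
      define i where "i = k - 1"
      have i: "i < ?m" "D i \<le> t" using i_def k \<open>0 < k\<close> by auto
      have Dit: "D i < t"
      proof (rule ccontr)
        assume "\<not> D i < t"
        then have "D i = t" using i by simp
        then have "ps!i = x" using dd_inj[OF p0n psn[OF i(1)] xn] D_def t_def by simp
        then show False using False i by auto
      qed
      have tnext: "i + 1 < ?m \<Longrightarrow> t < D (i+1)" using k i_def \<open>0 < k\<close> by auto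
      define j where "j = (i + c) mod ?m"
      have jm: "j < ?m" using j_def m0 by simp
      have ex: "ef (ps!i) = ps!j" using jp i j_def by simp
      have xin: "x \<in> cint n (ps!i) (ps!j)"
      proof (cases "i + c < ?m")
        case True
        then have jj: "j = i + c" using j_def by simp
        have "t < D (i+1)" using tnext True c by simp
        moreover have "D (i+1) \<le> D (i+c)" using Dml[of "i+1" "i+c"] True c by simp
        moreover have "D i \<le> D (i+c)" using Dml[OF i(1) True] by simp
        ultimately show ?thesis using cint_lin[OF p0n psn[OF i(1)] psn[OF jm], of x] xn Dit jj D_def t_def
          by (simp; linarith)
      next
        case F2: False
        then have jj: "j = i + c - ?m" using j_def mod_add_if[OF i(1) c(2)] by simp
        then have "j < i" using c F2 i by linarith
        then have "D j < D i" using Dm[OF jm i(1)] by simp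
        then show ?thesis using cint_lin[OF p0n psn[OF i(1)] psn[OF jm], of x] xn Dit D_def t_def
          by simp
      qed
      have c4: "dd n x (ps!j) \<le> dd n x (ef x)" using C4[OF psn[OF i(1)]] xin ex by simp
      have sub: "\<And>w. w \<in> cint n x (ps!j) \<Longrightarrow> w \<in> cint n x (ef x)"
        using cint_mem[OF xn psn[OF jm]] cint_mem[OF xn ef_lt] c4 by auto
      show ?thesis
      proof (cases "i + c < ?m")
        case True
        then have jj: "j = i + c" using j_def by simp
        have ic: "i < c" using True bg by simp
        have "t < D (i+1)" using tnext True c by simp
        moreover have "D (i+1) \<le> D c" using Dml[of "i+1" c] ic c by simp
        moreover have "D c \<le> D (i+c)" using Dml[of c "i+c"] True c by simp
        moreover have "t \<le> D (i+c)" using calculation by simp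
        ultimately have "z \<in> cint n x (ps!j)"
          using cint_lin[OF p0n xn psn[OF jm], of z] zn dz jj D_def t_def by (simp; linarith)
        then show ?thesis using sub by blast
      next
        case F2: False
        then have jj: "j = i + c - ?m" using j_def mod_add_if[OF i(1) c(2)] by simp
        then have "j < i" using c F2 i by linarith
        then have "D j < D i" using Dm[OF jm i(1)] by simp
        then have "p0 \<in> cint n x (ps!j)"
          using cint_lin[OF p0n xn psn[OF jm], of p0] p0n Dit D_def t_def by simp
        then show ?thesis using sub by blast
      qed
    qed
  qed
  have "\<forall>x<n. E \<inter> cint n x (ef x) \<noteq> {}" using cov E by blast
  then have EH: "E \<in> H" using sat_use[OF Erset] by simp
  have "elen p0 \<le> dd n p0 z" using elen_arc[OF p0n zn EH E(1)] .
  moreover have "elen p0 = D c" using dd_ef[OF p0n] jp[OF m0] c D_def p0_def by simp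
  ultimately show False using dz Dc r2 by simp
qed

lemma hard_frame: "\<exists>ps l. frame n ps \<and> length ps = 2*l+1 \<and> 1 \<le> l \<and>
   (\<forall>q<length ps. ef (ps!q) = ps!((q + l) mod length ps))"
proof -
  obtain ps c where pc: "frame n ps" "2 \<le> length ps" "1 \<le> c" "c < length ps"
    "\<forall>i<length ps. ef (ps!i) = ps!((i + c) mod length ps)" using frame_jump by blast
  let ?m = "length ps"
  have m0: "0 < ?m" using pc by linarith
  have "\<not> 2*c + 2 \<le> ?m"
  proof
    assume "2*c + 2 \<le> ?m"
    then show False using case_small[OF pc] by simp
  qed
  moreover have "\<not> ?m \<le> 2*c"
  proof
    assume bg: "?m \<le> 2*c"
    show False
    proof (cases "r \<le> dd n (ps!0) (ps!c)")
      case True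
      then show False using case_big[OF pc bg] by simp
    next
      case False
      define ps' where "ps' = rotate c ps"
      have f': "frame n ps'" using fr_rotate[OF pc(1) pc(4)] ps'_def by simp
      have nr': "\<And>q. q < ?m \<Longrightarrow> ps'!q = ps!((q + c) mod ?m)" using fr_rotate[OF pc(1) pc(4)] ps'_def
        by simp
      have l': "length ps' = ?m" using ps'_def by simp
      have jump': "\<forall>i<length ps'. ef (ps'!i) = ps'!((i + c) mod length ps')"
      proof (intro allI impI)
        fix i assume "i < length ps'"
        then have i: "i < ?m" using l' by simp
        have q: "(i + c) mod ?m < ?m" using m0 by simp
        show "ef (ps'!i) = ps'!((i + c) mod length ps')"
          using nr'[OF i] nr'[OF q] pc(5) q l' by simp
      qed
      have e0: "ps'!0 = ps!c" using nr'[OF m0] pc(4) by simp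
      define j where "j = (c + c) mod ?m"
      have ec: "ps'!c = ps!j" using nr'[OF pc(4)] j_def by simp
      have jj: "j = 2*c - ?m" using j_def mod_add_if[OF pc(4) pc(4)] bg pc(4) by simp
      have jc: "j < c" "j < ?m" using jj pc(3) pc(4) by linarith+
      define D where "D q = dd n (ps!0) (ps!q)" for q
      have "D j < D c" using fr_mono[OF pc(1) jc(2) pc(4)] jc D_def by simp
      moreover have "D c < n" using fr_Dlt[OF pc(1) pc(4)] D_def by simp
      moreover have "dd n (ps!c) (ps!j) = dd n (D c) (D j)" using fr_dd[OF pc(1) pc(4) jc(2)] D_def by simp
      ultimately have "dd n (ps!c) (ps!j) = D j + n - D c" unfolding dd_def by simp
      moreover have "D c < r" using False D_def by simp
      ultimately have "r \<le> dd n (ps'!0) (ps'!c)" using e0 ec nr by simp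
      then show False using case_big[OF f' _ pc(3) _ jump'] l' pc bg by simp
    qed
  qed
  ultimately have "?m = 2*c+1" by simp
  then show ?thesis using pc by blast
qed

end


lemma sat_nonempty:
  assumes "M1_saturated n r H" "2 \<le> r" "r \<le> n"
  shows "H \<noteq> {}"
proof
  assume He: "H = {}"
  define e where "e = {..<r}"
  have "e \<in> rsets n r" unfolding e_def rsets_def verts_def using assms by auto
  then have "contains_M1 n {e}" using assms He unfolding M1_saturated_def by auto
  then obtain u u' where "e \<subseteq> cint n u u'" "e \<inter> cint n u u' = {}" unfolding contains_M1_def by blast
  then have "e = {}" by blast
  moreover have "0 \<in> e" using e_def assms by simp
  ultimately show False by simp
qed

theorem theorem3p2:
  fixes n r :: nat and H :: "nat set set"
  assumes "r \<ge> 2" and "n \<ge> 2 * r" and "H \<subseteq> rsets n r"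
  shows "M1_saturated n r H \<longleftrightarrow>
    (\<exists>l\<ge>1. \<exists>C. length C = 2 * l + 1 \<and> r_valid n r C \<and> H = Hc n r C)"
proof
  assume sat: "M1_saturated n r H"
  have Hne: "H \<noteq> {}" using sat_nonempty[OF sat] assms by simp
  interpret satH n r H using assms sat Hne by unfold_locales auto
  obtain ps l where pl: "frame n ps" "length ps = 2*l+1" "1 \<le> l"
    "\<forall>q<length ps. ef (ps!q) = ps!((q + l) mod length ps)" using hard_frame by blast
  have psn: "\<And>q. q < length ps \<Longrightarrow> ps!q < n" using fr_lt[OF pl(1)] by simp
  have Bqe: "\<And>q. q < length ps \<Longrightarrow> Bq n ps l q = cint n (ps!q) (ef (ps!q))"
    unfolding Bq_def using pl(4) by simp
  have edge: "\<And>q. q < length ps \<Longrightarrow> \<exists>h\<in>H. h \<subseteq> Bq n ps l q" using Bqe elen_ok psn by simp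
  obtain C where C: "length C = 2*l+1" "semi_valid n C" "ilv C = ps" using construct_C[OF pl(1) pl(2)] by blast
  have big: "\<forall>q<2*l+1. r \<le> card (Bq n (ilv C) l q)"
  proof (intro allI impI)
    fix q assume q: "q < 2*l+1"
    then obtain h where h: "h \<in> H" "h \<subseteq> Bq n ps l q" using edge pl(2) by auto
    have "finite (Bq n ps l q)" unfolding Bq_def using cint_sub[OF n0] finite_subset
      by (metis finite_lessThan verts_def)
    then have "card h \<le> card (Bq n ps l q)" using h card_mono by blast
    then show "r \<le> card (Bq n (ilv C) l q)" using edge_card[OF h(1)] C(3) by simp
  qed
  have rv: "r_valid n r C" using r_valid_iff[OF C(1)] C(2) big by simp
  have HG: "H \<subseteq> Gf n r ps l"
    proof
      fix h assume h: "h \<in> H"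
      have "\<forall>q<length ps. h \<inter> Bq n ps l q \<noteq> {}"
      proof (intro allI impI)
        fix q assume q: "q < length ps"
        show "h \<inter> Bq n ps l q \<noteq> {}"
        proof
          assume dis: "h \<inter> Bq n ps l q = {}"
          obtain h' where h': "h' \<in> H" "h' \<subseteq> cint n (ps!q) (ef (ps!q))" using elen_ok psn q by blast
          have "ps!q \<in> verts n" "ef (ps!q) \<in> verts n" using psn q ef_lt verts_def by auto
          moreover have "ps!q \<noteq> ef (ps!q)" using ef_neq psn q by metis
          moreover have "h \<inter> cint n (ps!q) (ef (ps!q)) = {}" using dis Bqe[OF q] by simp
          ultimately have "contains_M1 n H" unfolding contains_M1_def using h h'
            by (intro bexI[of _ h'] bexI[of _ h] bexI[of _ "ps!q"] bexI[of _ "ef (ps!q)"]) auto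
          then show False using Hfree by simp
        qed
      qed
      then show "h \<in> Gf n r ps l" unfolding Gf_def using h Hr by auto
    qed
  have "H = Gf n r ps l"
  proof (rule equalityI[OF HG])
    show "Gf n r ps l \<subseteq> H"
    proof
      fix e assume e: "e \<in> Gf n r ps l"
      show "e \<in> H"
      proof (rule ccontr)
        assume "e \<notin> H"
        then have "contains_M1 n (insert e H)" using sat e unfolding M1_saturated_def Gf_def by blast
        moreover have "insert e H \<subseteq> Gf n r ps l" using e HG by blast
        ultimately have "contains_M1 n (Gf n r ps l)" by (rule contains_mono)
        then show False using Gf_free[OF pl(1) pl(2) r2] by simp
      qed
    qed
  qed
  then have "H = Hc n r C" using Hc_Gf[OF C(1)] C(3) by simp
  then show "\<exists>l\<ge>1. \<exists>C. length C = 2 * l + 1 \<and> r_valid n r C \<and> H = Hc n r C"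
    using C(1) rv pl(3) by blast
next
  assume "\<exists>l\<ge>1. \<exists>C. length C = 2 * l + 1 \<and> r_valid n r C \<and> H = Hc n r C"
  then obtain l C where lC: "1 \<le> l" "length C = 2*l+1" "r_valid n r C" "H = Hc n r C" by blast
  show "M1_saturated n r H" using easy_dir[OF assms(1) lC(2) lC(1) lC(3)] lC(4) by simp
qed


end
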